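(* Let $X$ be a paracompact $\sigma$-space, let $\{F_\alpha:\alpha\in A_i\}$ be a discrete family of closed subsets of $X$, and put $F_i=\bigcup\{F_\alpha:\alpha\in A_i\}$. If the pair $(X,F_\alpha)$ is semicanonical for every $\alpha\in A_i$, then the pair $(X,F_i)$ is semicanonical.
   Context: A $\sigma$-space is a regular $T_1$ space with a $\sigma$-discrete network. For a closed subset $A$ of $X$, the pair $(X,A)$ is semicanonical if there is an open cover $\omega$ of $X\setminus A$ such that every open neighborhood $OA$ of $A$ contains an open neighborhood $UA$ of $A$ such that every $G\in\omega$ with $G\cap UA\neq\varnothing$ satisfies $G\subseteq OA$. *)

theory Defs
  imports "HOL-Analysis.Analysis"
begin

definition paracompact_space :: "'a topology \<Rightarrow> bool" where
  "paracompact_space X \<longleftrightarrow>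
     (\<forall>\<U>. (\<forall>U\<in>\<U>. openin X U) \<and> topspace X \<subseteq> \<Union>\<U> \<longrightarrow>
        (\<exists>\<V>. (\<forall>V\<in>\<V>. openin X V) \<and> topspace X \<subseteq> \<Union>\<V> \<and>
             (\<forall>V\<in>\<V>. \<exists>U\<in>\<U>. V \<subseteq> U) \<and> locally_finite_in X \<V>))"

definition discrete_in :: "'a topology \<Rightarrow> 'a set set \<Rightarrow> bool" where
  "discrete_in X \<N> \<longleftrightarrow> \<Union>\<N> \<subseteq> topspace X \<and>
     (\<forall>x\<in>topspace X. \<exists>V. openin X V \<and> x \<in> V \<and>
        (\<forall>N1\<in>\<N>. \<forall>N2\<in>\<N>. N1 \<inter> V \<noteq> {} \<and> N2 \<inter> V \<noteq> {} \<longrightarrow> N1 = N2))"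

definition discrete_family_in :: "'a topology \<Rightarrow> 'i set \<Rightarrow> ('i \<Rightarrow> 'a set) \<Rightarrow> bool" where
  "discrete_family_in X A F \<longleftrightarrow> (\<forall>a\<in>A. F a \<subseteq> topspace X) \<and>
     (\<forall>x\<in>topspace X. \<exists>V. openin X V \<and> x \<in> V \<and>
        (\<forall>a\<in>A. \<forall>b\<in>A. F a \<inter> V \<noteq> {} \<and> F b \<inter> V \<noteq> {} \<longrightarrow> a = b))"

definition network_in :: "'a topology \<Rightarrow> 'a set set \<Rightarrow> bool" where
  "network_in X \<N> \<longleftrightarrow> \<Union>\<N> \<subseteq> topspace X \<and>
     (\<forall>U x. openin X U \<and> x \<in> U \<longrightarrow> (\<exists>N\<in>\<N>. x \<in> N \<and> N \<subseteq> U))"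

definition sigma_discrete_in :: "'a topology \<Rightarrow> 'a set set \<Rightarrow> bool" where
  "sigma_discrete_in X \<N> \<longleftrightarrow>
     (\<exists>\<N>s :: nat \<Rightarrow> 'a set set. (\<forall>n. discrete_in X (\<N>s n)) \<and> \<N> = (\<Union>n. \<N>s n))"

definition sigma_space :: "'a topology \<Rightarrow> bool" where
  "sigma_space X \<longleftrightarrow> regular_space X \<and> t1_space X \<and>
     (\<exists>\<N>. network_in X \<N> \<and> sigma_discrete_in X \<N>)"

definition semicanonical :: "'a topology \<Rightarrow> 'a set \<Rightarrow> bool" where
  "semicanonical X A \<longleftrightarrow>
     (\<exists>\<omega>. (\<forall>G\<in>\<omega>. openin X G \<and> G \<subseteq> topspace X - A) \<and> topspace X - A \<subseteq> \<Union>\<omega> \<and>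
        (\<forall>OA. openin X OA \<and> A \<subseteq> OA \<longrightarrow>
           (\<exists>UA. openin X UA \<and> A \<subseteq> UA \<and> UA \<subseteq> OA \<and>
              (\<forall>G\<in>\<omega>. G \<inter> UA \<noteq> {} \<longrightarrow> G \<subseteq> OA))))"

end

theory Submission
  imports Defs
begin

lemma regular_shrink:
  assumes "regular_space X" "openin X V" "x \<in> V"
  shows "\<exists>U. openin X U \<and> x \<in> U \<and> X closure_of U \<subseteq> V"
proof -
  have "closedin X (topspace X - V)" using assms(2) by blast
  moreover have "x \<in> topspace X - (topspace X - V)" using assms(2,3) openin_subset by fastforce
  ultimately obtain U where U: "openin X U" "x \<in> U" "disjnt (topspace X - V) (X closure_of U)"
    using assms(1) unfolding regular_space by blast
  have "X closure_of U \<subseteq> topspace X" by (rule closure_of_subset_topspace)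
  with U show ?thesis by (auto simp: disjnt_def)
qed

theorem mainTheorem11:
  fixes X :: "'a topology" and A :: "'i set" and F :: "'i \<Rightarrow> 'a set"
  assumes "paracompact_space X" and "sigma_space X"
    and "\<forall>a\<in>A. closedin X (F a)"
    and "discrete_family_in X A F"
    and "\<forall>a\<in>A. semicanonical X (F a)"
  shows "semicanonical X (\<Union>a\<in>A. F a)"
proof -
  let ?T = "topspace X"
  let ?FF = "\<Union>a\<in>A. F a"
  have reg: "regular_space X" using assms(2) unfolding sigma_space_def by blast
  have "\<forall>a\<in>A. \<exists>\<omega>. (\<forall>G\<in>\<omega>. openin X G \<and> G \<subseteq> ?T - F a) \<and> ?T - F a \<subseteq> \<Union>\<omega> \<and>
        (\<forall>OA. openin X OA \<and> F a \<subseteq> OA \<longrightarrow>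
           (\<exists>UA. openin X UA \<and> F a \<subseteq> UA \<and> UA \<subseteq> OA \<and>
              (\<forall>G\<in>\<omega>. G \<inter> UA \<noteq> {} \<longrightarrow> G \<subseteq> OA)))"
    using assms(5) unfolding semicanonical_def by simp
  from bchoice[OF this] obtain Om where Om0: "\<forall>a\<in>A. (\<forall>G\<in>Om a. openin X G \<and> G \<subseteq> ?T - F a) \<and> ?T - F a \<subseteq> \<Union>(Om a) \<and>
        (\<forall>OA. openin X OA \<and> F a \<subseteq> OA \<longrightarrow>
           (\<exists>UA. openin X UA \<and> F a \<subseteq> UA \<and> UA \<subseteq> OA \<and>
              (\<forall>G\<in>Om a. G \<inter> UA \<noteq> {} \<longrightarrow> G \<subseteq> OA)))" by (elim exE) (rule that)
  note Om = Om0[rule_format]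
  define P where "P V \<longleftrightarrow> (\<forall>a\<in>A. \<forall>b\<in>A. X closure_of V \<inter> F a \<noteq> {} \<and> X closure_of V \<inter> F b \<noteq> {} \<longrightarrow> a = b)" for V
  define UU where "UU = {V. openin X V \<and> P V}"
  have UUcov: "?T \<subseteq> \<Union>UU"
  proof
    fix x assume x: "x \<in> ?T"
    have "\<forall>x\<in>?T. \<exists>V. openin X V \<and> x \<in> V \<and>
        (\<forall>a\<in>A. \<forall>b\<in>A. F a \<inter> V \<noteq> {} \<and> F b \<inter> V \<noteq> {} \<longrightarrow> a = b)"
      using assms(4) unfolding discrete_family_in_def by (rule conjunct2)
    from bspec[OF this x] obtain V where V: "openin X V" "x \<in> V"
      "\<forall>a\<in>A. \<forall>b\<in>A. F a \<inter> V \<noteq> {} \<and> F b \<inter> V \<noteq> {} \<longrightarrow> a = b"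
      by (elim exE conjE) (rule that)
    obtain U where U: "openin X U" "x \<in> U" "X closure_of U \<subseteq> V"
      using regular_shrink[OF reg V(1,2)] by blast
    have "P U" unfolding P_def
    proof (intro ballI impI)
      fix a b assume "a \<in> A" "b \<in> A" "X closure_of U \<inter> F a \<noteq> {} \<and> X closure_of U \<inter> F b \<noteq> {}"
      then have "F a \<inter> V \<noteq> {} \<and> F b \<inter> V \<noteq> {}" using U(3) by blast
      then show "a = b" using V(3) \<open>a \<in> A\<close> \<open>b \<in> A\<close> by blast
    qed
    with U show "x \<in> \<Union>UU" unfolding UU_def by blast
  qed
  obtain WW where WW: "\<forall>W\<in>WW. openin X W" "?T \<subseteq> \<Union>WW" "\<forall>W\<in>WW. \<exists>U\<in>UU. W \<subseteq> U"
    "locally_finite_in X WW"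
    using assms(1)[unfolded paracompact_space_def, rule_format, of UU] UUcov unfolding UU_def by blast
  have PW: "P W" if W: "W \<in> WW" for W
  proof -
    obtain U where "U \<in> UU" "W \<subseteq> U" using bspec[OF WW(3) W] by (elim bexE) (rule that)
    then have "X closure_of W \<subseteq> X closure_of U" "P U" by (auto simp: closure_of_mono UU_def)
    then show ?thesis unfolding P_def by blast
  qed
  have Wsub: "W \<subseteq> X closure_of W" if "W \<in> WW" for W
    using WW(1) that closure_of_subset openin_subset by metis
  define S where "S b = ?T - \<Union>((\<lambda>W. X closure_of W) ` {W\<in>WW. X closure_of W \<inter> F b = {}})" for b
  have Sopen: "openin X (S b)" for b
  proof -
    have "locally_finite_in X {W\<in>WW. X closure_of W \<inter> F b = {}}"
      by (rule locally_finite_in_subset[OF WW(4)]) auto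
    then have "closedin X (\<Union>((\<lambda>W. X closure_of W) ` {W\<in>WW. X closure_of W \<inter> F b = {}}))"
      by (rule closedin_Union_locally_finite_closure)
    then show ?thesis unfolding S_def by (rule openin_diff[OF openin_topspace])
  qed
  have FS: "F b \<subseteq> S b" if b: "b \<in> A" for b
  proof -
    have "F b \<subseteq> ?T" using assms(4) b unfolding discrete_family_in_def by (simp add: Ball_def)
    then show ?thesis unfolding S_def by auto
  qed
  have SW: "X closure_of W \<inter> F b \<noteq> {}" if W: "W \<in> WW" "W \<inter> S b \<noteq> {}" for W b
    using W Wsub[OF W(1)] unfolding S_def by blast
  define \<omega> where "\<omega> = {G \<inter> W | a G W. a \<in> A \<and> G \<in> Om a \<and> W \<in> WW \<and> X closure_of W \<inter> F a \<noteq> {}}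
     \<union> {W\<in>WW. \<forall>a\<in>A. X closure_of W \<inter> F a = {}}"
  have c1: "\<forall>H\<in>\<omega>. openin X H \<and> H \<subseteq> ?T - ?FF"
  proof
    fix H assume "H \<in> \<omega>"
    then consider (a) a G W where "H = G \<inter> W" "a \<in> A" "G \<in> Om a" "W \<in> WW" "X closure_of W \<inter> F a \<noteq> {}"
      | (b) "H \<in> WW" "\<forall>a\<in>A. X closure_of H \<inter> F a = {}"
      unfolding \<omega>_def by blast
    then show "openin X H \<and> H \<subseteq> ?T - ?FF"
    proof cases
      case a
      have G: "openin X G" "G \<subseteq> ?T - F a" using Om[OF a(2)] a(3) by auto
      have "W \<inter> F b = {}" if bb: "b \<in> A" "b \<noteq> a" for b
        using PW[OF a(4)] a(2,5) bb Wsub[OF a(4)] unfolding P_def by blast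
      then show ?thesis using a G WW(1) by blast
    next
      case b
      then show ?thesis using WW(1) Wsub[OF b(1)] openin_subset by blast
    qed
  qed
  have c2: "?T - ?FF \<subseteq> \<Union>\<omega>"
    proof
      fix x assume x: "x \<in> ?T - ?FF"
      then obtain W where W: "W \<in> WW" "x \<in> W" using WW(2) by blast
      show "x \<in> \<Union>\<omega>"
      proof (cases "\<exists>a\<in>A. X closure_of W \<inter> F a \<noteq> {}")
        case True
        then obtain a where a: "a \<in> A" "X closure_of W \<inter> F a \<noteq> {}" by blast
        have "x \<in> ?T - F a" using x a(1) by blast
        then have "x \<in> \<Union>(Om a)" using Om[OF a(1)] by blast
        then obtain G where "G \<in> Om a" "x \<in> G" by blast
        then have "G \<inter> W \<in> \<omega>" unfolding \<omega>_def using a W by blast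
        then show ?thesis using \<open>x \<in> G\<close> W by blast
      next
        case False
        then have "W \<in> \<omega>" unfolding \<omega>_def using W by blast
        then show ?thesis using W by blast
      qed
    qed
  have c3: "\<forall>OA. openin X OA \<and> ?FF \<subseteq> OA \<longrightarrow> (\<exists>UA. openin X UA \<and> ?FF \<subseteq> UA \<and> UA \<subseteq> OA \<and> (\<forall>G\<in>\<omega>. G \<inter> UA \<noteq> {} \<longrightarrow> G \<subseteq> OA))"
  proof (intro allI impI)
    fix OA assume OA: "openin X OA \<and> ?FF \<subseteq> OA"
    have "\<forall>a\<in>A. \<exists>UA. openin X UA \<and> F a \<subseteq> UA \<and> UA \<subseteq> OA \<and>
              (\<forall>G\<in>Om a. G \<inter> UA \<noteq> {} \<longrightarrow> G \<subseteq> OA)"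
    proof
      fix a assume a: "a \<in> A"
      have OAa: "openin X OA \<and> F a \<subseteq> OA" using OA a by blast
      show "\<exists>UA. openin X UA \<and> F a \<subseteq> UA \<and> UA \<subseteq> OA \<and>
              (\<forall>G\<in>Om a. G \<inter> UA \<noteq> {} \<longrightarrow> G \<subseteq> OA)"
        using conjunct2[OF conjunct2[OF Om[OF a]], rule_format, OF OAa] .
    qed
    from bchoice[OF this] obtain U where U0: "\<forall>a\<in>A. openin X (U a) \<and> F a \<subseteq> U a \<and> U a \<subseteq> OA \<and>
              (\<forall>G\<in>Om a. G \<inter> U a \<noteq> {} \<longrightarrow> G \<subseteq> OA)" by (elim exE) (rule that)
    note U = U0[rule_format]
    define UF where "UF = (\<Union>a\<in>A. U a \<inter> S a)"
    show "\<exists>UA. openin X UA \<and> ?FF \<subseteq> UA \<and> UA \<subseteq> OA \<and> (\<forall>G\<in>\<omega>. G \<inter> UA \<noteq> {} \<longrightarrow> G \<subseteq> OA)"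
    proof (intro exI[of _ UF] conjI ballI impI)
      show "openin X UF" unfolding UF_def
        by (intro openin_Union) (auto intro!: openin_Int simp: U Sopen)
      show "?FF \<subseteq> UF" unfolding UF_def
      proof (rule UN_mono[OF order_refl])
        fix a assume aA: "a \<in> A"
        show "F a \<subseteq> U a \<inter> S a" using U[OF aA] FS[OF aA] by blast
      qed
      show "UF \<subseteq> OA" unfolding UF_def using U by blast
    next
      fix H assume H: "H \<in> \<omega>" "H \<inter> UF \<noteq> {}"
      then obtain b where b: "b \<in> A" "H \<inter> (U b \<inter> S b) \<noteq> {}" unfolding UF_def by blast
      from H(1) consider (a) a G W where "H = G \<inter> W" "a \<in> A" "G \<in> Om a" "W \<in> WW" "X closure_of W \<inter> F a \<noteq> {}"
        | (c) "H \<in> WW" "\<forall>a\<in>A. X closure_of H \<inter> F a = {}"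
        unfolding \<omega>_def by blast
      then show "H \<subseteq> OA"
      proof cases
        case a
        have "X closure_of W \<inter> F b \<noteq> {}" using SW[OF a(4)] a(1) b(2) by blast
        then have "b = a" using PW[OF a(4)] a(2,5) b(1) unfolding P_def by blast
        then have "G \<inter> U a \<noteq> {}" using a(1) b(2) by blast
        then show ?thesis using U[OF a(2)] a(1,3) by blast
      next
        case c
        then show ?thesis using SW[OF c(1)] b by blast
      qed
    qed
  qed
  show ?thesis unfolding semicanonical_def using c1 c2 c3 by blast
qed

end
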